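(* Fix $k\ge3$. Consider the recursive network formation model with the utility function described in the context. Instead of a single node, the process starts from the base graph for the $k$-star: $2k$ nodes, namely $k$ pairwise adjacent centers, each also adjacent to exactly one distinct leaf. Suppose $$\gamma=0,\qquad c=b_1-b_3,\qquad b_2-b_3<c_0<b_2-b_4.$$ Then the resulting topology is a $k$-star: for every $n\ge 2k$, the pairwise stable network reached when the network has $n$ nodes is a $k$-star network on $n$ nodes, irrespective of the random order in which nodes are selected to move.
   Context: A $k$-star network ($k\ge3$) on $n\ge 2k$ nodes consists of $k$ "center" nodes that are pairwise adjacent, forming a clique. Every other node is a leaf adjacent to exactly one center and to nothing else. Each center has at least one leaf, and the numbers of leaves of any two centers differ by at most one. Networks are finite simple undirected graphs whose vertices (nodes) are self-interested agents. Parameters: benefits $b_1>b_2>b_3>b_4>\dots>0$, where $b_i$ is the benefit a node obtains from a node at distance $i$; a link cost $c$ per immediate neighbor; an intermediation fraction $\gamma$ with $0\le\gamma<1$; and a network entry factor $c_0$. Notation: $N$ is the set of nodes currently in the network, $d_j$ the degree of $j$, and $l(j,w)$ the graph distance. A node $x$ is essential for a pair $y,z$ (with $x\notin\{y,z\}$) if $x$ lies on every path joining $y$ and $z$. Write $E(y,z)$ for the set of nodes essential for $y,z$ and $e(y,z)=|E(y,z)|$. Only pairs joined by a path contribute to the sums below. Utility of node $j$ in network $g$: $$u_j(g)=-c_0\,d_{T(j)}\mathbf 1_{\{j=\mathrm{NE}\}}+d_j(b_1-c)+\sum_{w\in N,\ l(j,w)>1}b_{l(j,w)}-\sum_{w\in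 N,\ E(j,w)\ne\emptyset}\gamma\, b_{l(j,w)}+\sum_{y,z\in N,\ j\in E(y,z)}\frac{\gamma}{e(y,z)}\,2\,b_{l(y,z)}.$$ Here $\mathbf 1_{\{j=\mathrm{NE}\}}=1$ exactly when $j$ is a newly entering node evaluating the creation of its first link. $T(j)$ is the existing node to which $j$ forms that first link, and $d_{T(j)}$ is that node's degree before the link. The network before entry gives the entering node utility $0$. Pairwise stability: $g$ is pairwise stable if (a) for every link $(i,j)\in g$, $u_i(g\setminus\{(i,j)\})\le u_i(g)$ and $u_j(g\setminus\{(i,j)\})\le u_j(g)$; and (b) for every non-link $(i,j)\notin g$, if $u_i(g\cup\{(i,j)\})>u_i(g)$ then $u_j(g\cup\{(i,j)\})<u_j(g)$. Recursive model of network formation (from a given base graph): - When the current network of $n-1$ nodes is pairwise stable, a new node considers entering. Its options are to stay out or to propose a link to one existing node. The link forms iff the receiving node's utility does not decrease. No existing node can link to the newcomer before it has formed this first link. - After entry, nodes are repeatedly chosen at random to move. A chosen node plays a myopic best response among three options: create a link with a non-neighbor (the link forms only if the other node's utility does not decrease, which the proposer anticipates); delete a link with a neighbor (unilaterally); or keep the status quo. It alters a link only if this strictly increases its current utility. - This continues until the network is pairwise stable; then the next node considers entering, and so on. *)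

theory Defs
  imports Complex_Main
begin

text \<open>A network with n nodes has node set {..<n}; its links are 2-element
  sets {i,j} of nodes.  Parameters: benefit function b (b i = benefit from a node
  at distance i, only i >= 1 is used), link cost c, intermediation fraction gam,
  entry factor c0.\<close>

definition nbrs :: "nat set set \<Rightarrow> nat \<Rightarrow> nat set" where
  "nbrs E j = {w. {j, w} \<in> E \<and> w \<noteq> j}"

definition deg :: "nat set set \<Rightarrow> nat \<Rightarrow> nat" where
  "deg E j = card (nbrs E j)"

fun walk :: "nat set set \<Rightarrow> nat list \<Rightarrow> bool" where
  "walk E [] = True"
| "walk E [x] = True"
| "walk E (x # y # xs) = ({x, y} \<in> E \<and> x \<noteq> y \<and> walk E (y # xs))"

definition walk_betw :: "nat set set \<Rightarrow> nat \<Rightarrow> nat list \<Rightarrow> nat \<Rightarrow> bool" where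
  "walk_betw E y xs z = (xs \<noteq> [] \<and> walk E xs \<and> hd xs = y \<and> last xs = z)"

definition reach :: "nat set set \<Rightarrow> nat \<Rightarrow> nat \<Rightarrow> bool" where
  "reach E y z = (\<exists>xs. walk_betw E y xs z)"

text \<open>graph distance l(y,z): number of links of a shortest walk\<close>
definition dist :: "nat set set \<Rightarrow> nat \<Rightarrow> nat \<Rightarrow> nat" where
  "dist E y z = (LEAST m. \<exists>xs. walk_betw E y xs z \<and> length xs = Suc m)"

definition essential :: "nat set set \<Rightarrow> nat \<Rightarrow> nat \<Rightarrow> nat \<Rightarrow> bool" where
  "essential E x y z = (x \<notin> {y, z} \<and> (\<forall>xs. walk_betw E y xs z \<longrightarrow> x \<in> set xs))"

definition ess_set :: "nat \<Rightarrow> nat set set \<Rightarrow> nat \<Rightarrow> nat \<Rightarrow> nat set" where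
  "ess_set n E y z = {x \<in> {..<n}. essential E x y z}"

text \<open>Utility of node j in network (n,E), without the entry term.\<close>
definition util :: "(nat \<Rightarrow> real) \<Rightarrow> real \<Rightarrow> real \<Rightarrow> nat \<Rightarrow> nat set set \<Rightarrow> nat \<Rightarrow> real" where
  "util b c gam n E j =
     real (deg E j) * (b 1 - c)
     + (\<Sum>w\<in>{w\<in>{..<n}. reach E j w \<and> dist E j w > 1}. b (dist E j w))
     - (\<Sum>w\<in>{w\<in>{..<n}. reach E j w \<and> ess_set n E j w \<noteq> {}}. gam * b (dist E j w))
     + (\<Sum>p\<in>{(y, z). y < n \<and> z < n \<and> y < z \<and> reach E y z \<and> j \<in> ess_set n E y z}.
          gam / real (card (ess_set n E (fst p) (snd p))) * 2 * b (dist E (fst p) (snd p)))"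

definition pairwise_stable ::
  "(nat \<Rightarrow> real) \<Rightarrow> real \<Rightarrow> real \<Rightarrow> nat \<Rightarrow> nat set set \<Rightarrow> bool" where
  "pairwise_stable b c gam n E =
     ((\<forall>i<n. \<forall>j<n. i \<noteq> j \<and> {i, j} \<in> E \<longrightarrow>
          util b c gam n (E - {{i, j}}) i \<le> util b c gam n E i)
    \<and> (\<forall>i<n. \<forall>j<n. i \<noteq> j \<and> {i, j} \<notin> E \<and>
          util b c gam n (insert {i, j} E) i > util b c gam n E i \<longrightarrow>
          util b c gam n (insert {i, j} E) j < util b c gam n E j))"

definition options ::
  "(nat \<Rightarrow> real) \<Rightarrow> real \<Rightarrow> real \<Rightarrow> nat \<Rightarrow> nat set set \<Rightarrow> nat \<Rightarrow> nat set set set" where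
  "options b c gam n E i =
     {E}
     \<union> {insert {i, j} E | j. j < n \<and> j \<noteq> i \<and> {i, j} \<notin> E \<and>
           util b c gam n (insert {i, j} E) j \<ge> util b c gam n E j}
     \<union> {E - {{i, j}} | j. j < n \<and> j \<noteq> i \<and> {i, j} \<in> E}"

definition move ::
  "(nat \<Rightarrow> real) \<Rightarrow> real \<Rightarrow> real \<Rightarrow> nat \<Rightarrow> nat set set \<Rightarrow> nat set set \<Rightarrow> bool" where
  "move b c gam n E E' =
     (\<exists>i<n. E' \<in> options b c gam n E i
        \<and> util b c gam n E' i > util b c gam n E i
        \<and> (\<forall>E''\<in>options b c gam n E i. util b c gam n E'' i \<le> util b c gam n E' i))"

definition entry_value ::
  "(nat \<Rightarrow> real) \<Rightarrow> real \<Rightarrow> real \<Rightarrow> real \<Rightarrow> nat \<Rightarrow> nat set set \<Rightarrow> nat \<Rightarrow> real" where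
  "entry_value b c gam c0 n E t =
     util b c gam (Suc n) (insert {n, t} E) n - c0 * real (deg E t)"

definition entry_feasible ::
  "(nat \<Rightarrow> real) \<Rightarrow> real \<Rightarrow> real \<Rightarrow> nat \<Rightarrow> nat set set \<Rightarrow> nat \<Rightarrow> bool" where
  "entry_feasible b c gam n E t =
     (t < n \<and> util b c gam (Suc n) (insert {n, t} E) t \<ge> util b c gam n E t)"

text \<open>Entry of node n: best response among staying out (utility 0) and linking to
  an accepting existing node t.\<close>
definition entry ::
  "(nat \<Rightarrow> real) \<Rightarrow> real \<Rightarrow> real \<Rightarrow> real \<Rightarrow> nat \<Rightarrow> nat set set \<Rightarrow> nat set set \<Rightarrow> bool" where
  "entry b c gam c0 n E E' =
     (\<exists>t. entry_feasible b c gam n E t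
        \<and> entry_value b c gam c0 n E t > 0
        \<and> (\<forall>t'. entry_feasible b c gam n E t' \<longrightarrow>
                 entry_value b c gam c0 n E t' \<le> entry_value b c gam c0 n E t)
        \<and> E' = insert {n, t} E)"

definition step ::
  "(nat \<Rightarrow> real) \<Rightarrow> real \<Rightarrow> real \<Rightarrow> real \<Rightarrow> nat \<times> nat set set \<Rightarrow> nat \<times> nat set set \<Rightarrow> bool" where
  "step b c gam c0 s s' =
     (case s of (n, E) \<Rightarrow> case s' of (n', E') \<Rightarrow>
        (pairwise_stable b c gam n E \<and> n' = Suc n \<and> entry b c gam c0 n E E')
      \<or> (\<not> pairwise_stable b c gam n E \<and> n' = n \<and> move b c gam n E E'))"

definition base_kstar :: "nat \<Rightarrow> nat set set" where
  "base_kstar k = {{i, j} | i j. i < k \<and> j < k \<and> i \<noteq> j} \<union> {{i, k + i} | i. i < k}"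

definition kstar :: "nat \<Rightarrow> nat \<Rightarrow> nat set set \<Rightarrow> bool" where
  "kstar k n E =
     (2 * k \<le> n
      \<and> (\<forall>e\<in>E. \<exists>i j. i < n \<and> j < n \<and> i \<noteq> j \<and> e = {i, j})
      \<and> (\<exists>C. C \<subseteq> {..<n} \<and> card C = k
           \<and> (\<forall>x\<in>C. \<forall>y\<in>C. x \<noteq> y \<longrightarrow> {x, y} \<in> E)
           \<and> (\<forall>l\<in>{..<n} - C. \<exists>x\<in>C. nbrs E l = {x})
           \<and> (\<forall>x\<in>C. card (nbrs E x - C) \<ge> 1)
           \<and> (\<forall>x\<in>C. \<forall>y\<in>C. card (nbrs E x - C) \<le> card (nbrs E y - C) + 1)))"

end

theory Submission
  imports Defs
begin



lemma walk_bound: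
  assumes cl: "\<forall>u v. {u,v}\<in>E \<longrightarrow> u\<noteq>v \<longrightarrow> u\<in>S \<longrightarrow> v\<in>S \<and> h v \<le> h u + 1"
  shows "walk E xs \<Longrightarrow> xs \<noteq> [] \<Longrightarrow> hd xs \<in> S \<Longrightarrow> last xs \<in> S \<and> h (last xs) \<le> h (hd xs) + (length xs - 1)"
proof (induction xs)
  case (Cons x xs)
  show ?case
  proof (cases xs)
    case Nil then show ?thesis using Cons by simp
  next
    case (Cons y ys)
    with Cons.prems have "{x,y}\<in>E" "x\<noteq>y" "walk E xs" "x \<in> S" by auto
    then have "y \<in> S" "h y \<le> h x + 1" using cl[rule_format, of x y] by auto
    then show ?thesis using Cons.IH \<open>walk E xs\<close> Cons by auto
  qed
qed simp

lemma walk_snoc: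
  "walk E xs \<Longrightarrow> xs \<noteq> [] \<Longrightarrow> {last xs, w} \<in> E \<Longrightarrow> last xs \<noteq> w \<Longrightarrow> walk E (xs @ [w])"
  by (induction E xs rule: walk.induct) auto

lemma walk_exists:
  assumes j: "h j = 0"
    and pr: "\<forall>w\<in>S. w\<noteq>j \<longrightarrow> (\<exists>u\<in>S. {u,w}\<in>E \<and> u\<noteq>w \<and> h u + 1 = h w)"
  shows "w \<in> S \<Longrightarrow> h w = d \<Longrightarrow> \<exists>xs. walk_betw E j xs w \<and> length xs = Suc d"
proof (induction d arbitrary: w)
  case 0
  then have "w = j" using pr by force
  then show ?case by (intro exI[of _ "[j]"]) (simp add: walk_betw_def)
next
  case (Suc d)
  then have "w \<noteq> j" using j by auto
  then obtain u where u: "u\<in>S" "{u,w}\<in>E" "u\<noteq>w" "h u + 1 = h w" using pr Suc by blast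
  then obtain xs where xs: "walk_betw E j xs u" "length xs = Suc d" using Suc by auto
  then show ?case using u walk_snoc[of E xs w]
    by (intro exI[of _ "xs @ [w]"]) (auto simp: walk_betw_def)
qed



lemma util_h:
  assumes S: "j \<in> S" "S \<subseteq> {..<n}" and j: "h j = 0"
    and cl: "\<forall>u v. {u,v}\<in>E \<longrightarrow> u\<noteq>v \<longrightarrow> u\<in>S \<longrightarrow> v\<in>S \<and> h v \<le> h u + 1"
    and pr: "\<forall>w\<in>S. w\<noteq>j \<longrightarrow> (\<exists>u\<in>S. {u,w}\<in>E \<and> u\<noteq>w \<and> h u + 1 = h w)"
  shows "nbrs E j = {w\<in>S. w\<noteq>j \<and> h w = 1}"
    and "util b c 0 n E j = (\<Sum>w<n. if w\<in>S \<and> w\<noteq>j then (if h w = 1 then b 1 - c else b (h w)) else 0)"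
proof -
  have hpos: "w\<in>S \<Longrightarrow> w\<noteq>j \<Longrightarrow> h w > 0" for w using pr by force
  have reachS: "reach E j w \<longleftrightarrow> w \<in> S" for w
  proof
    assume "reach E j w"
    then obtain xs where "walk_betw E j xs w" unfolding reach_def by auto
    then show "w \<in> S" using walk_bound[OF cl, of xs] S by (auto simp: walk_betw_def)
  next
    assume "w \<in> S"
    then show "reach E j w" using walk_exists[OF j pr] unfolding reach_def by blast
  qed
  have distS: "w \<in> S \<Longrightarrow> dist E j w = h w" for w
    unfolding dist_def
  proof (rule Least_equality)
    assume "w \<in> S"
    then show "\<exists>xs. walk_betw E j xs w \<and> length xs = Suc (h w)" using walk_exists[OF j pr] by blast
  next
    fix m assume "\<exists>xs. walk_betw E j xs w \<and> length xs = Suc m"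
    then obtain xs where "walk_betw E j xs w" "length xs = Suc m" by auto
    then show "h w \<le> m" using walk_bound[OF cl, of xs] S j by (auto simp: walk_betw_def)
  qed
  show nb: "nbrs E j = {w\<in>S. w\<noteq>j \<and> h w = 1}"
  proof (intro set_eqI iffI)
    fix w assume "w \<in> nbrs E j"
    then have "{j,w}\<in>E" "w\<noteq>j" by (auto simp: nbrs_def)
    then show "w\<in>{w\<in>S. w\<noteq>j \<and> h w = 1}" using cl[rule_format, of j w] S j hpos[of w] by auto
  next
    fix w assume "w\<in>{w\<in>S. w\<noteq>j \<and> h w = 1}"
    then have w: "w \<in> S" "w \<noteq> j" "h w = 1" by auto
    then obtain u where "u\<in>S" "{u,w}\<in>E" "u\<noteq>w" "h u + 1 = h w" using pr by blast
    then have "u = j" using hpos[of u] w by auto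
    then show "w \<in> nbrs E j" using \<open>{u,w}\<in>E\<close> \<open>w\<in>{w\<in>S. w\<noteq>j \<and> h w = 1}\<close> by (auto simp: nbrs_def)
  qed
  have finS: "finite S" by (rule finite_subset[OF S(2)]) simp
  have fin: "finite {w\<in>S. w\<noteq>j \<and> h w = 1}" using finS by simp
  have d: "real (deg E j) * (b 1 - c) = (\<Sum>w<n. if w\<in>S \<and> w\<noteq>j \<and> h w = 1 then b 1 - c else 0)"
  proof -
    have "{w\<in>S. w\<noteq>j \<and> h w = 1} = {w\<in>{..<n}. w\<in>S \<and> w\<noteq>j \<and> h w = 1}" using S by auto
    then have "real (card {w\<in>S. w\<noteq>j \<and> h w = 1}) * (b 1 - c) = (\<Sum>w\<in>{w\<in>{..<n}. w\<in>S \<and> w\<noteq>j \<and> h w = 1}. b 1 - c)"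
      by simp
    also have "\<dots> = (\<Sum>w<n. if w\<in>S \<and> w\<noteq>j \<and> h w = 1 then b 1 - c else 0)"
      by (rule sum.inter_filter) simp
    finally show ?thesis unfolding deg_def nb .
  qed
  have e: "(\<Sum>w\<in>{w\<in>{..<n}. reach E j w \<and> dist E j w > 1}. b (dist E j w))
      = (\<Sum>w<n. if w\<in>S \<and> h w > 1 then b (h w) else 0)"
  proof -
    have eq: "{w\<in>{..<n}. reach E j w \<and> dist E j w > 1} = {w\<in>{..<n}. w\<in>S \<and> h w > 1}"
    proof (rule Collect_cong)
      fix w show "(w\<in>{..<n} \<and> reach E j w \<and> 1 < dist E j w) = (w\<in>{..<n} \<and> w \<in> S \<and> 1 < h w)"
        by (cases "w\<in>S") (simp_all add: reachS distS)
    qed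
    have "(\<Sum>w\<in>{w\<in>{..<n}. reach E j w \<and> dist E j w > 1}. b (dist E j w))
        = (\<Sum>w\<in>{w\<in>{..<n}. w\<in>S \<and> h w > 1}. b (h w))"
      unfolding eq by (rule sum.cong) (simp_all add: distS)
    also have "\<dots> = (\<Sum>w<n. if w\<in>S \<and> h w > 1 then b (h w) else 0)"
      by (rule sum.inter_filter) simp
    finally show ?thesis .
  qed
  have u: "util b c 0 n E j = real (deg E j) * (b 1 - c)
     + (\<Sum>w\<in>{w\<in>{..<n}. reach E j w \<and> dist E j w > 1}. b (dist E j w))"
    unfolding util_def by simp
  have pt: "(if w\<in>S \<and> w\<noteq>j \<and> h w = 1 then b 1 - c else 0) + (if w\<in>S \<and> h w > 1 then b (h w) else 0)
      = (if w\<in>S \<and> w\<noteq>j then (if h w = 1 then b 1 - c else b (h w)) else 0)" for w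
  proof (cases "w \<in> S \<and> w \<noteq> j")
    case True
    then have "h w > 0" using hpos by blast
    then show ?thesis using True by auto
  next
    case False
    then show ?thesis using j by auto
  qed
  show "util b c 0 n E j = (\<Sum>w<n. if w\<in>S \<and> w\<noteq>j then (if h w = 1 then b 1 - c else b (h w)) else 0)"
    unfolding u d e sum.distrib[symmetric] pt ..
qed




definition G :: "nat \<Rightarrow> nat \<Rightarrow> (nat \<Rightarrow> nat) \<Rightarrow> nat set set" where
  "G k n f = {{i,j}|i j. i<k \<and> j<k \<and> i\<noteq>j} \<union> {{l, f l}|l. k\<le>l \<and> l<n}"

lemma memG:
  assumes fk: "\<forall>l. k\<le>l \<longrightarrow> l<n \<longrightarrow> f l < k" and uv: "u \<noteq> v"
  shows "{u,v}\<in>G k n f \<longleftrightarrow> (u<k \<and> v<k) \<or> (k\<le>u \<and> u<n \<and> v = f u) \<or> (k\<le>v \<and> v<n \<and> u = f v)"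
proof
  assume "{u,v}\<in>G k n f"
  then show "(u<k \<and> v<k) \<or> (k\<le>u \<and> u<n \<and> v = f u) \<or> (k\<le>v \<and> v<n \<and> u = f v)"
    unfolding G_def using uv by (auto simp: doubleton_eq_iff)
next
  assume "(u<k \<and> v<k) \<or> (k\<le>u \<and> u<n \<and> v = f u) \<or> (k\<le>v \<and> v<n \<and> u = f v)"
  then show "{u,v}\<in>G k n f"
  proof (elim disjE)
    assume "u<k \<and> v<k" then show ?thesis using uv unfolding G_def by blast
  next
    assume "k\<le>u \<and> u<n \<and> v = f u" then show ?thesis unfolding G_def by blast
  next
    assume a: "k\<le>v \<and> v<n \<and> u = f v"
    then have "{u,v} = {v, f v}" by auto
    then show ?thesis using a unfolding G_def by blast
  qed
qed

lemma G_no_loop: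
  assumes fk: "\<forall>l. k\<le>l \<longrightarrow> l<n \<longrightarrow> f l < k"
  shows "{u,u} \<notin> G k n f"
  using fk unfolding G_def by (auto simp: doubleton_eq_iff)

lemma memG':
  assumes fk: "\<forall>l. k\<le>l \<longrightarrow> l<n \<longrightarrow> f l < k"
  shows "{u,v}\<in>G k n f \<longleftrightarrow> u \<noteq> v \<and> ((u<k \<and> v<k) \<or> (k\<le>u \<and> u<n \<and> v = f u) \<or> (k\<le>v \<and> v<n \<and> u = f v))"
  using memG[OF fk] G_no_loop[OF fk] by (cases "u = v") auto

lemma util_U1:
  assumes fk: "\<forall>l. k\<le>l \<longrightarrow> l<n \<longrightarrow> f l < k" and kn: "k \<le> n" and x: "x < k"
  shows "util b c 0 n (G k n f) x = (\<Sum>w<n. if w = x then 0 else if w < k then b 1 - c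
            else if f w = x then b 1 - c else b 2)"
proof -
  define h where "h w = (if w = x then 0 else if w<k then 1 else if f w = x then 1 else (2::nat))" for w
  have cl: "\<forall>u v. {u,v}\<in>G k n f \<longrightarrow> u\<noteq>v \<longrightarrow> u\<in>{..<n} \<longrightarrow> v\<in>{..<n} \<and> h v \<le> h u + 1"
    using kn fk x by (auto simp: memG'[OF fk] h_def)
  have pr: "\<forall>w\<in>{..<n}. w\<noteq>x \<longrightarrow> (\<exists>u\<in>{..<n}. {u,w}\<in>G k n f \<and> u\<noteq>w \<and> h u + 1 = h w)"
  proof (intro ballI impI)
    fix w assume w: "w \<in> {..<n}" "w \<noteq> x"
    show "\<exists>u\<in>{..<n}. {u,w}\<in>G k n f \<and> u\<noteq>w \<and> h u + 1 = h w"
    proof (cases "w < k \<or> f w = x")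
      case True
      then show ?thesis using w x kn by (intro bexI[of _ x]) (auto simp: memG'[OF fk] h_def)
    next
      case False
      then have "f w < k" using fk w by auto
      then show ?thesis using w False kn by (intro bexI[of _ "f w"]) (auto simp: memG'[OF fk] h_def)
    qed
  qed
  have "util b c 0 n (G k n f) x = (\<Sum>w<n. if w\<in>{..<n} \<and> w\<noteq>x then (if h w = 1 then b 1 - c else b (h w)) else 0)"
    by (rule util_h(2)[OF _ _ _ cl pr]) (use x kn in \<open>auto simp: h_def\<close>)
  also have "\<dots> = (\<Sum>w<n. if w = x then 0 else if w < k then b 1 - c
            else if f w = x then b 1 - c else b 2)"
    by (rule sum.cong) (auto simp: h_def)
  finally show ?thesis .
qed

lemma util_U2:
  assumes fk: "\<forall>l. k\<le>l \<longrightarrow> l<n \<longrightarrow> f l < k" and kn: "k \<le> n" and l: "k \<le> l" "l < n"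
  shows "util b c 0 n (G k n f) l = (\<Sum>w<n. if w = l then 0 else if w < k then (if w = f l then b 1 - c else b 2)
            else if f w = f l then b 2 else b 3)"
proof -
  define m where "m = f l"
  have m: "m < k" using fk l m_def by auto
  define h where "h w = (if w = l then 0 else if w = m then 1 else if w<k then 2 else if f w = m then 2 else (3::nat))" for w
  have cl: "\<forall>u v. {u,v}\<in>G k n f \<longrightarrow> u\<noteq>v \<longrightarrow> u\<in>{..<n} \<longrightarrow> v\<in>{..<n} \<and> h v \<le> h u + 1"
    using kn fk l m m_def by (auto simp: memG'[OF fk] h_def)
  have pr: "\<forall>w\<in>{..<n}. w\<noteq>l \<longrightarrow> (\<exists>u\<in>{..<n}. {u,w}\<in>G k n f \<and> u\<noteq>w \<and> h u + 1 = h w)"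
  proof (intro ballI impI)
    fix w assume w: "w \<in> {..<n}" "w \<noteq> l"
    show "\<exists>u\<in>{..<n}. {u,w}\<in>G k n f \<and> u\<noteq>w \<and> h u + 1 = h w"
    proof (cases "w = m")
      case True
      then show ?thesis using w l m m_def kn by (intro bexI[of _ l]) (auto simp: memG'[OF fk] h_def)
    next
      case False
      show ?thesis
      proof (cases "w < k \<or> f w = m")
        case True
        then show ?thesis using w m kn False l by (intro bexI[of _ m]) (auto simp: memG'[OF fk] h_def)
      next
        case False2: False
        then have "f w < k" using fk w by auto
        then show ?thesis using w False False2 kn l by (intro bexI[of _ "f w"]) (auto simp: memG'[OF fk] h_def)
      qed
    qed
  qed
  have "util b c 0 n (G k n f) l = (\<Sum>w<n. if w\<in>{..<n} \<and> w\<noteq>l then (if h w = 1 then b 1 - c else b (h w)) else 0)"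
    by (rule util_h(2)[OF _ _ _ cl pr]) (use l in \<open>auto simp: h_def\<close>)
  also have "\<dots> = (\<Sum>w<n. if w = l then 0 else if w < k then (if w = f l then b 1 - c else b 2)
            else if f w = f l then b 2 else b 3)"
    using m m_def by (intro sum.cong) (auto simp: h_def)
  finally show ?thesis .
qed

lemma util_D1:
  assumes fk: "\<forall>l. k\<le>l \<longrightarrow> l<n \<longrightarrow> f l < k" and kn: "k \<le> n" and k3: "3 \<le> k"
    and ij: "i < k" "j < k" "i \<noteq> j"
  shows "util b c 0 n (G k n f - {{i,j}}) i = (\<Sum>w<n. if w = i then 0 else if w < k then (if w = j then b 2 else b 1 - c)
            else if f w = i then b 1 - c else if f w = j then b 3 else b 2)"
proof -
  define h where "h w = (if w = i then 0 else if w<k then (if w = j then 2 else 1) else if f w = i then 1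
     else if f w = j then 3 else (2::nat))" for w
  have cl: "\<forall>u v. {u,v}\<in>G k n f - {{i,j}} \<longrightarrow> u\<noteq>v \<longrightarrow> u\<in>{..<n} \<longrightarrow> v\<in>{..<n} \<and> h v \<le> h u + 1"
    using kn fk ij by (auto simp: memG'[OF fk] h_def doubleton_eq_iff)
  have pr: "\<forall>w\<in>{..<n}. w\<noteq>i \<longrightarrow> (\<exists>u\<in>{..<n}. {u,w}\<in>G k n f - {{i,j}} \<and> u\<noteq>w \<and> h u + 1 = h w)"
  proof (intro ballI impI)
    fix w assume w: "w \<in> {..<n}" "w \<noteq> i"
    show "\<exists>u\<in>{..<n}. {u,w}\<in>G k n f - {{i,j}} \<and> u\<noteq>w \<and> h u + 1 = h w"
    proof (cases "w = j")
      case True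
      obtain z where z: "z < k" "z \<noteq> i" "z \<noteq> j"
      proof -
        have "card ({..<k} - {i,j}) \<ge> 1" using k3 ij by (simp add: card_Diff_subset)
        then obtain z where "z \<in> {..<k} - {i,j}"
          by (metis card.empty ex_in_conv not_one_le_zero)
        then show ?thesis using that by auto
      qed
      then show ?thesis using w True ij kn by (intro bexI[of _ z]) (auto simp: memG'[OF fk] h_def doubleton_eq_iff)
    next
      case False
      show ?thesis
      proof (cases "w < k \<or> f w = i")
        case True
        then show ?thesis using w ij kn False by (intro bexI[of _ i]) (auto simp: memG'[OF fk] h_def doubleton_eq_iff)
      next
        case False2: False
        then have "f w < k" using fk w by auto
        then show ?thesis using w False False2 kn ij by (intro bexI[of _ "f w"]) (auto simp: memG'[OF fk] h_def doubleton_eq_iff)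
      qed
    qed
  qed
  have "util b c 0 n (G k n f - {{i,j}}) i = (\<Sum>w<n. if w\<in>{..<n} \<and> w\<noteq>i then (if h w = 1 then b 1 - c else b (h w)) else 0)"
    by (rule util_h(2)[OF _ _ _ cl pr]) (use ij kn in \<open>auto simp: h_def\<close>)
  also have "\<dots> = (\<Sum>w<n. if w = i then 0 else if w < k then (if w = j then b 2 else b 1 - c)
            else if f w = i then b 1 - c else if f w = j then b 3 else b 2)"
    by (rule sum.cong) (auto simp: h_def)
  finally show ?thesis .
qed




lemma util_D2:
  assumes fk: "\<forall>l. k\<le>l \<longrightarrow> l<n \<longrightarrow> f l < k" and kn: "k \<le> n" and l: "k \<le> l" "l < n"
  shows "util b c 0 n (G k n f - {{f l, l}}) (f l) = (\<Sum>w<n. if w = f l \<or> w = l then 0 else if w < k then b 1 - c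
            else if f w = f l then b 1 - c else b 2)"
proof -
  define x where "x = f l"
  have x: "x < k" using fk l x_def by auto
  define h where "h w = (if w = x then 0 else if w<k then 1 else if f w = x then 1 else (2::nat))" for w
  define S where "S = {..<n} - {l}"
  have cl: "\<forall>u v. {u,v}\<in>G k n f - {{x,l}} \<longrightarrow> u\<noteq>v \<longrightarrow> u\<in>S \<longrightarrow> v\<in>S \<and> h v \<le> h u + 1"
    using kn fk x l x_def by (auto simp: memG'[OF fk] h_def S_def doubleton_eq_iff)
  have pr: "\<forall>w\<in>S. w\<noteq>x \<longrightarrow> (\<exists>u\<in>S. {u,w}\<in>G k n f - {{x,l}} \<and> u\<noteq>w \<and> h u + 1 = h w)"
  proof (intro ballI impI)
    fix w assume w: "w \<in> S" "w \<noteq> x"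
    show "\<exists>u\<in>S. {u,w}\<in>G k n f - {{x,l}} \<and> u\<noteq>w \<and> h u + 1 = h w"
    proof (cases "w < k \<or> f w = x")
      case True
      then show ?thesis using w x kn l by (intro bexI[of _ x]) (auto simp: memG'[OF fk] h_def S_def doubleton_eq_iff)
    next
      case False
      then have "f w < k" using fk w by (auto simp: S_def)
      then show ?thesis using w False kn l by (intro bexI[of _ "f w"]) (auto simp: memG'[OF fk] h_def S_def doubleton_eq_iff)
    qed
  qed
  have "util b c 0 n (G k n f - {{x,l}}) x = (\<Sum>w<n. if w\<in>S \<and> w\<noteq>x then (if h w = 1 then b 1 - c else b (h w)) else 0)"
    by (rule util_h(2)[OF _ _ _ cl pr]) (use x kn l in \<open>auto simp: h_def S_def\<close>)
  also have "\<dots> = (\<Sum>w<n. if w = x \<or> w = l then 0 else if w < k then b 1 - c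
            else if f w = x then b 1 - c else b 2)"
    by (rule sum.cong) (auto simp: h_def S_def)
  finally show ?thesis unfolding x_def .
qed

lemma util_D3:
  assumes fk: "\<forall>l. k\<le>l \<longrightarrow> l<n \<longrightarrow> f l < k" and kn: "k \<le> n" and l: "k \<le> l" "l < n"
  shows "util b c 0 n (G k n f - {{l, f l}}) l = 0"
proof -
  define h :: "nat \<Rightarrow> nat" where "h w = 0" for w
  have cl: "\<forall>u v. {u,v}\<in>G k n f - {{l, f l}} \<longrightarrow> u\<noteq>v \<longrightarrow> u\<in>{l} \<longrightarrow> v\<in>{l} \<and> h v \<le> h u + 1"
    using kn fk l by (auto simp: memG'[OF fk] h_def doubleton_eq_iff)
  have pr: "\<forall>w\<in>{l}. w\<noteq>l \<longrightarrow> (\<exists>u\<in>{l}. {u,w}\<in>G k n f - {{l, f l}} \<and> u\<noteq>w \<and> h u + 1 = h w)"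
    by simp
  have "util b c 0 n (G k n f - {{l, f l}}) l = (\<Sum>w<n. if w\<in>{l} \<and> w\<noteq>l then (if h w = 1 then b 1 - c else b (h w)) else 0)"
    by (rule util_h(2)[OF _ _ _ cl pr]) (use l in \<open>auto simp: h_def\<close>)
  then show ?thesis by simp
qed

lemma util_A1:
  assumes fk: "\<forall>l. k\<le>l \<longrightarrow> l<n \<longrightarrow> f l < k" and kn: "k \<le> n" and x: "x < k"
    and l: "k \<le> l" "l < n" "f l \<noteq> x"
  shows "util b c 0 n (insert {x,l} (G k n f)) x = (\<Sum>w<n. if w = x then 0 else if w < k then b 1 - c
            else if w = l then b 1 - c else if f w = x then b 1 - c else b 2)"
proof -
  define h where "h w = (if w = x then 0 else if w<k then 1 else if w = l then 1 else if f w = x then 1 else (2::nat))" for w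
  have cl: "\<forall>u v. {u,v}\<in>insert {x,l} (G k n f) \<longrightarrow> u\<noteq>v \<longrightarrow> u\<in>{..<n} \<longrightarrow> v\<in>{..<n} \<and> h v \<le> h u + 1"
    using kn fk x l by (auto simp: memG'[OF fk] h_def doubleton_eq_iff)
  have pr: "\<forall>w\<in>{..<n}. w\<noteq>x \<longrightarrow> (\<exists>u\<in>{..<n}. {u,w}\<in>insert {x,l} (G k n f) \<and> u\<noteq>w \<and> h u + 1 = h w)"
  proof (intro ballI impI)
    fix w assume w: "w \<in> {..<n}" "w \<noteq> x"
    show "\<exists>u\<in>{..<n}. {u,w}\<in>insert {x,l} (G k n f) \<and> u\<noteq>w \<and> h u + 1 = h w"
    proof (cases "w < k \<or> f w = x \<or> w = l")
      case True
      then show ?thesis using w x kn l by (intro bexI[of _ x]) (auto simp: memG'[OF fk] h_def)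
    next
      case False
      then have "f w < k" using fk w by auto
      then show ?thesis using w False kn l by (intro bexI[of _ "f w"]) (auto simp: memG'[OF fk] h_def)
    qed
  qed
  have "util b c 0 n (insert {x,l} (G k n f)) x = (\<Sum>w<n. if w\<in>{..<n} \<and> w\<noteq>x then (if h w = 1 then b 1 - c else b (h w)) else 0)"
    by (rule util_h(2)[OF _ _ _ cl pr]) (use x kn in \<open>auto simp: h_def\<close>)
  also have "\<dots> = (\<Sum>w<n. if w = x then 0 else if w < k then b 1 - c
            else if w = l then b 1 - c else if f w = x then b 1 - c else b 2)"
    by (rule sum.cong) (auto simp: h_def)
  finally show ?thesis .
qed

lemma util_A34:
  assumes fk: "\<forall>l. k\<le>l \<longrightarrow> l<n \<longrightarrow> f l < k" and kn: "k \<le> n"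
    and l: "k \<le> l" "l < n" "k \<le> l2" "l2 < n" "l \<noteq> l2"
  shows "util b c 0 n (insert {l,l2} (G k n f)) l = (\<Sum>w<n. if w = l then 0 else if w < k then (if w = f l then b 1 - c else b 2)
            else if w = l2 then b 1 - c else if f w = f l then b 2 else b 3)"
proof -
  define m where "m = f l"
  have m: "m < k" using fk l m_def by auto
  define h where "h w = (if w = l then 0 else if w = m \<or> w = l2 then 1 else if w<k then 2 else if f w = m then 2 else (3::nat))" for w
  have cl: "\<forall>u v. {u,v}\<in>insert {l,l2} (G k n f) \<longrightarrow> u\<noteq>v \<longrightarrow> u\<in>{..<n} \<longrightarrow> v\<in>{..<n} \<and> h v \<le> h u + 1"
    using kn fk l m m_def by (auto simp: memG'[OF fk] h_def doubleton_eq_iff)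
  have pr: "\<forall>w\<in>{..<n}. w\<noteq>l \<longrightarrow> (\<exists>u\<in>{..<n}. {u,w}\<in>insert {l,l2} (G k n f) \<and> u\<noteq>w \<and> h u + 1 = h w)"
  proof (intro ballI impI)
    fix w assume w: "w \<in> {..<n}" "w \<noteq> l"
    show "\<exists>u\<in>{..<n}. {u,w}\<in>insert {l,l2} (G k n f) \<and> u\<noteq>w \<and> h u + 1 = h w"
    proof (cases "w = m \<or> w = l2")
      case True
      then show ?thesis using w l m m_def kn by (intro bexI[of _ l]) (auto simp: memG'[OF fk] h_def)
    next
      case False
      show ?thesis
      proof (cases "w < k \<or> f w = m")
        case True
        then show ?thesis using w m kn False l by (intro bexI[of _ m]) (auto simp: memG'[OF fk] h_def)
      next
        case False2: False
        then have "f w < k" using fk w by auto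
        then show ?thesis using w False False2 kn l by (intro bexI[of _ "f w"]) (auto simp: memG'[OF fk] h_def)
      qed
    qed
  qed
  have "util b c 0 n (insert {l,l2} (G k n f)) l = (\<Sum>w<n. if w\<in>{..<n} \<and> w\<noteq>l then (if h w = 1 then b 1 - c else b (h w)) else 0)"
    by (rule util_h(2)[OF _ _ _ cl pr]) (use l in \<open>auto simp: h_def\<close>)
  also have "\<dots> = (\<Sum>w<n. if w = l then 0 else if w < k then (if w = f l then b 1 - c else b 2)
            else if w = l2 then b 1 - c else if f w = f l then b 2 else b 3)"
    using m m_def l by (intro sum.cong) (auto simp: h_def)
  finally show ?thesis .
qed

lemma util_E2:
  assumes fk: "\<forall>l. k\<le>l \<longrightarrow> l<n \<longrightarrow> f l < k" and kn: "k \<le> n" and t: "k \<le> t" "t < n"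
  shows "util b c 0 (Suc n) (insert {n,t} (G k n f)) n = (\<Sum>w<Suc n. if w = n then 0 else if w < k then (if w = f t then b 2 else b 3)
            else if w = t then b 1 - c else if f w = f t then b 3 else b 4)"
proof -
  define m where "m = f t"
  have m: "m < k" using fk t m_def by auto
  define h where "h w = (if w = n then 0 else if w = t then 1 else if w = m then 2 else if w<k then 3 else if f w = m then 3 else (4::nat))" for w
  have cl: "\<forall>u v. {u,v}\<in>insert {n,t} (G k n f) \<longrightarrow> u\<noteq>v \<longrightarrow> u\<in>{..<Suc n} \<longrightarrow> v\<in>{..<Suc n} \<and> h v \<le> h u + 1"
    using kn fk t m m_def by (auto simp: memG'[OF fk] h_def doubleton_eq_iff)
  have pr: "\<forall>w\<in>{..<Suc n}. w\<noteq>n \<longrightarrow> (\<exists>u\<in>{..<Suc n}. {u,w}\<in>insert {n,t} (G k n f) \<and> u\<noteq>w \<and> h u + 1 = h w)"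
  proof (intro ballI impI)
    fix w assume w: "w \<in> {..<Suc n}" "w \<noteq> n"
    then have wn: "w < n" by auto
    show "\<exists>u\<in>{..<Suc n}. {u,w}\<in>insert {n,t} (G k n f) \<and> u\<noteq>w \<and> h u + 1 = h w"
    proof (cases "w = t")
      case True
      then show ?thesis using wn t by (intro bexI[of _ n]) (auto simp: h_def)
    next
      case F1: False
      show ?thesis
      proof (cases "w = m")
        case True
        then show ?thesis using wn t m m_def kn F1 by (intro bexI[of _ t]) (auto simp: memG'[OF fk] h_def)
      next
        case F2: False
        show ?thesis
        proof (cases "w < k \<or> f w = m")
          case True
          then show ?thesis using wn m kn F1 F2 t by (intro bexI[of _ m]) (auto simp: memG'[OF fk] h_def)
        next
          case F3: False
          then have "f w < k" using fk wn by auto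
          then show ?thesis using wn F1 F2 F3 kn t by (intro bexI[of _ "f w"]) (auto simp: memG'[OF fk] h_def)
        qed
      qed
    qed
  qed
  have "util b c 0 (Suc n) (insert {n,t} (G k n f)) n = (\<Sum>w<Suc n. if w\<in>{..<Suc n} \<and> w\<noteq>n then (if h w = 1 then b 1 - c else b (h w)) else 0)"
    by (rule util_h(2)[OF _ _ _ cl pr]) (use t in \<open>auto simp: h_def\<close>)
  also have "\<dots> = (\<Sum>w<Suc n. if w = n then 0 else if w < k then (if w = f t then b 2 else b 3)
            else if w = t then b 1 - c else if f w = f t then b 3 else b 4)"
    using m m_def t by (intro sum.cong) (auto simp: h_def)
  finally show ?thesis .
qed




definition Lc :: "nat \<Rightarrow> nat \<Rightarrow> (nat \<Rightarrow> nat) \<Rightarrow> nat \<Rightarrow> nat" where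
  "Lc k n f x = card {l\<in>{k..<n}. f l = x}"

lemma sum_if_count:
  "finite A \<Longrightarrow> (\<Sum>w\<in>A. if P w then a else d) = real (card {w\<in>A. P w}) * a + real (card {w\<in>A. \<not> P w}) * (d::real)"
proof -
  assume A: "finite A"
  have "(\<Sum>w\<in>A. if P w then a else d) = (\<Sum>w\<in>{w\<in>A. P w}. a) + (\<Sum>w\<in>{w\<in>A. \<not> P w}. d)"
    using A by (simp add: sum.If_cases Int_def Collect_conj_eq[symmetric] Diff_eq[symmetric] set_diff_eq)
  then show ?thesis by simp
qed

lemma card_split: "finite A \<Longrightarrow> card {w\<in>A. P w} + card {w\<in>A. \<not> P w} = card A"
proof -
  assume A: "finite A"
  have "A = {w\<in>A. P w} \<union> {w\<in>A. \<not> P w}" by auto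
  then have "card A = card ({w\<in>A. P w} \<union> {w\<in>A. \<not> P w})" by simp
  also have "\<dots> = card {w\<in>A. P w} + card {w\<in>A. \<not> P w}" using A by (intro card_Un_disjoint) auto
  finally show ?thesis by simp
qed

lemma sum_center:
  assumes "t < k"
  shows "(\<Sum>w<k. if w = t then p else q) = p + (real k - 1) * (q::real)"
proof -
  have c1: "{w\<in>{..<k}. w = t} = {t}" using assms by auto
  have "card {w\<in>{..<k}. w = t} + card {w\<in>{..<k}. w \<noteq> t} = k" using card_split[of "{..<k}" "\<lambda>w. w = t"] by simp
  then have c2: "card {w\<in>{..<k}. w \<noteq> t} = k - 1" unfolding c1 by simp
  have "k \<ge> 1" using assms by simp
  then show ?thesis unfolding sum_if_count[OF finite_lessThan] c1 c2 by (simp add: of_nat_diff)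
qed

lemma sum_split_n:
  fixes k n :: nat
  assumes "k \<le> n"
  shows "(\<Sum>w<n. g w) = (\<Sum>w<k. g w) + (\<Sum>w\<in>{k..<n}. g w)"
proof -
  have "{..<n} = {..<k} \<union> {k..<n}" using assms by (auto simp: not_le)
  then show ?thesis by (simp add: sum.union_disjoint ivl_disj_int)
qed

lemma card_leaves: "k \<le> n \<Longrightarrow> card {k..<n} = n - k" by simp

lemma sum_leaves:
  assumes "k \<le> n"
  shows "(\<Sum>w\<in>{k..<n}. if f w = x then a else d) = real (Lc k n f x) * a + (real n - real k - real (Lc k n f x)) * (d::real)"
proof -
  have "card {w\<in>{k..<n}. f w = x} + card {w\<in>{k..<n}. f w \<noteq> x} = n - k" using card_split[of "{k..<n}"] by simp
  then have "real (card {w\<in>{k..<n}. f w \<noteq> x}) = real n - real k - real (Lc k n f x)"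
    using assms unfolding Lc_def by linarith
  then show ?thesis by (simp add: sum_if_count Lc_def)
qed

lemma sum_leaves2:
  assumes "k \<le> t" "t < n" "f t = m"
  shows "(\<Sum>w\<in>{k..<n}. if w = t then p else if f w = m then a else d)
     = p + (real (Lc k n f m) - 1) * a + (real n - real k - real (Lc k n f m)) * (d::real)"
proof -
  have A: "{k..<n} = insert t ({k..<n} - {t})" using assms by auto
  have "(\<Sum>w\<in>{k..<n}. if w = t then p else if f w = m then a else d)
      = p + (\<Sum>w\<in>{k..<n} - {t}. if w = t then p else if f w = m then a else d)"
    by (subst A) (simp add: sum.insert_remove)
  also have "(\<Sum>w\<in>{k..<n} - {t}. if w = t then p else if f w = m then a else d)
      = (\<Sum>w\<in>{k..<n} - {t}. if f w = m then a else d)" by (rule sum.cong) auto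
  also have "\<dots> = real (card {w\<in>{k..<n} - {t}. f w = m}) * a + real (card {w\<in>{k..<n} - {t}. f w \<noteq> m}) * d"
    by (simp add: sum_if_count)
  also have "card {w\<in>{k..<n} - {t}. f w = m} = Lc k n f m - 1"
  proof -
    have "{w\<in>{k..<n} - {t}. f w = m} = {l\<in>{k..<n}. f l = m} - {t}" by auto
    then show ?thesis unfolding Lc_def using assms by simp
  qed
  also have "{w\<in>{k..<n} - {t}. f w \<noteq> m} = {w\<in>{k..<n}. f w \<noteq> m}" using assms by auto
  finally have eq: "(\<Sum>w\<in>{k..<n}. if w = t then p else if f w = m then a else d)
      = p + (real (Lc k n f m - 1) * a + real (card {w\<in>{k..<n}. f w \<noteq> m}) * d)" .
  have pos: "Lc k n f m \<ge> 1"
  proof -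
    have "t \<in> {l\<in>{k..<n}. f l = m}" using assms by auto
    then have "card {l\<in>{k..<n}. f l = m} \<noteq> 0" by auto
    then show ?thesis unfolding Lc_def by linarith
  qed
  have "card {w\<in>{k..<n}. f w = m} + card {w\<in>{k..<n}. f w \<noteq> m} = n - k" using card_split[of "{k..<n}"] by simp
  then have "real (card {w\<in>{k..<n}. f w \<noteq> m}) = real n - real k - real (Lc k n f m)"
    using assms unfolding Lc_def by linarith
  then show ?thesis using eq pos by (simp add: of_nat_diff)
qed




locale ks =
  fixes k :: nat and b :: "nat \<Rightarrow> real" and c c0 :: real
  assumes k3: "3 \<le> k" and bpos: "\<forall>i\<ge>1. b i > 0" and bdec: "\<forall>i\<ge>1. b (Suc i) < b i"
    and cdef: "c = b 1 - b 3" and c0l: "b 2 - b 3 < c0" and c0u: "c0 < b 2 - b 4"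
begin

lemma B3: "b 1 - c = b 3" using cdef by simp
lemma b4pos: "b 4 > 0" using bpos by simp
lemma b3pos: "b 3 > 0" using bpos by simp
lemma b2pos: "b 2 > 0" using bpos by simp
lemma b34: "b 4 < b 3" using bdec[rule_format, of 3] by (simp add: numeral_eq_Suc)
lemma b23: "b 3 < b 2" using bdec[rule_format, of 2] by (simp add: numeral_eq_Suc)

definition inv :: "nat \<Rightarrow> (nat \<Rightarrow> nat) \<Rightarrow> bool" where
  "inv n f \<longleftrightarrow> 2*k \<le> n \<and> (\<forall>l. k\<le>l \<longrightarrow> l<n \<longrightarrow> f l < k) \<and> (\<forall>x<k. 1 \<le> Lc k n f x)
      \<and> (\<forall>x<k. \<forall>y<k. Lc k n f x \<le> Lc k n f y + 1)"

lemma cmp_D1: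
  assumes fk: "\<forall>l. k\<le>l \<longrightarrow> l<n \<longrightarrow> f l < k" and kn: "k \<le> n"
    and ij: "i < k" "j < k" "i \<noteq> j" and l0: "k \<le> l0" "l0 < n" "f l0 = j"
  shows "util b c 0 n (G k n f - {{i,j}}) i \<le> util b c 0 n (G k n f) i"
proof -
  define g1 where "g1 w = (if w = i then 0 else if w < k then b 1 - c else if f w = i then b 1 - c else b 2)" for w
  define g2 where "g2 w = (if w = i then 0 else if w < k then (if w = j then b 2 else b 1 - c)
            else if f w = i then b 1 - c else if f w = j then b 3 else b 2)" for w
  have u1: "util b c 0 n (G k n f) i = (\<Sum>w<n. g1 w)" unfolding g1_def by (rule util_U1[OF fk kn ij(1)])
  have u2: "util b c 0 n (G k n f - {{i,j}}) i = (\<Sum>w<n. g2 w)" unfolding g2_def by (rule util_D1[OF fk kn k3 ij])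
  define d where "d w = g1 w - g2 w" for w
  have T: "{j, l0} \<subseteq> {..<n}" using ij l0 kn by auto
  have s1: "(\<Sum>w<n. d w) = (\<Sum>w\<in>{j,l0}. d w) + (\<Sum>w\<in>{..<n} - {j,l0}. d w)"
    using sum.subset_diff[OF T] by (simp add: add.commute)
  have s2: "(\<Sum>w\<in>{j,l0}. d w) = d j + d l0" using ij l0 by simp
  have s3: "d j + d l0 = 0" using ij l0 by (simp add: d_def g1_def g2_def cdef)
  have s4: "(\<Sum>w\<in>{..<n} - {j,l0}. d w) \<ge> 0"
    by (rule sum_nonneg) (use b23 in \<open>auto simp: d_def g1_def g2_def cdef\<close>)
  have "(\<Sum>w<n. d w) \<ge> 0" using s1 s2 s3 s4 by linarith
  then show ?thesis unfolding u1 u2 d_def by (simp add: sum_subtractf)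
qed

lemma cmp_D2:
  assumes fk: "\<forall>l. k\<le>l \<longrightarrow> l<n \<longrightarrow> f l < k" and kn: "k \<le> n" and l: "k \<le> l" "l < n"
  shows "util b c 0 n (G k n f - {{f l, l}}) (f l) \<le> util b c 0 n (G k n f) (f l)"
proof -
  have x: "f l < k" using fk l by auto
  show ?thesis unfolding util_U1[OF fk kn x] util_D2[OF fk kn l]
    by (rule sum_mono) (use b3pos in \<open>auto simp: cdef\<close>)
qed

lemma cmp_D3:
  assumes fk: "\<forall>l. k\<le>l \<longrightarrow> l<n \<longrightarrow> f l < k" and kn: "k \<le> n" and l: "k \<le> l" "l < n"
  shows "util b c 0 n (G k n f - {{l, f l}}) l \<le> util b c 0 n (G k n f) l"
  unfolding util_D3[OF fk kn l] util_U2[OF fk kn l]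
  by (rule sum_nonneg) (use b3pos b2pos in \<open>auto simp: cdef\<close>)

lemma cmp_A1:
  assumes fk: "\<forall>l. k\<le>l \<longrightarrow> l<n \<longrightarrow> f l < k" and kn: "k \<le> n" and x: "x < k"
    and l: "k \<le> l" "l < n" "f l \<noteq> x"
  shows "util b c 0 n (insert {x,l} (G k n f)) x < util b c 0 n (G k n f) x"
  unfolding util_U1[OF fk kn x] util_A1[OF fk kn x l]
proof (rule sum_strict_mono_ex1)
  show "\<forall>w\<in>{..<n}. (if w = x then 0 else if w < k then b 1 - c else if w = l then b 1 - c else if f w = x then b 1 - c else b 2)
     \<le> (if w = x then 0 else if w < k then b 1 - c else if f w = x then b 1 - c else b 2)"
    using b23 l by (auto simp: cdef)
  show "\<exists>w\<in>{..<n}. (if w = x then 0 else if w < k then b 1 - c else if w = l then b 1 - c else if f w = x then b 1 - c else b 2)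
     < (if w = x then 0 else if w < k then b 1 - c else if f w = x then b 1 - c else b 2)"
    using b23 l x by (intro bexI[of _ l]) (auto simp: cdef)
qed simp

lemma cmp_A34:
  assumes fk: "\<forall>l. k\<le>l \<longrightarrow> l<n \<longrightarrow> f l < k" and kn: "k \<le> n"
    and l: "k \<le> l" "l < n" "k \<le> l2" "l2 < n" "l \<noteq> l2"
  shows "util b c 0 n (insert {l,l2} (G k n f)) l \<le> util b c 0 n (G k n f) l"
  unfolding util_U2[OF fk kn l(1,2)] util_A34[OF fk kn l]
  by (rule sum_mono) (use b23 l in \<open>auto simp: cdef\<close>)

lemma inv_leaf:
  assumes "inv n f" "x < k"
  obtains l where "k \<le> l" "l < n" "f l = x"
proof -
  have "1 \<le> Lc k n f x" using assms unfolding inv_def by auto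
  then have "{l\<in>{k..<n}. f l = x} \<noteq> {}" unfolding Lc_def by (metis card.empty not_one_le_zero)
  then show ?thesis using that by auto
qed

lemma PS:
  assumes I: "inv n f"
  shows "pairwise_stable b c 0 n (G k n f)"
proof -
  have fk: "\<forall>l. k\<le>l \<longrightarrow> l<n \<longrightarrow> f l < k" and kn: "k \<le> n" using I unfolding inv_def by auto
  show ?thesis unfolding pairwise_stable_def
  proof (intro conjI allI impI)
    fix i j assume ij: "i < n" "j < n" "i \<noteq> j \<and> {i,j} \<in> G k n f"
    then consider (cc) "i<k" "j<k" | (lc) "k\<le>i" "j = f i" | (cl) "k\<le>j" "i = f j"
      using memG'[OF fk] by auto
    then show "util b c 0 n (G k n f - {{i, j}}) i \<le> util b c 0 n (G k n f) i"
    proof cases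
      case cc
      obtain l0 where "k \<le> l0" "l0 < n" "f l0 = j" using inv_leaf[OF I cc(2)] .
      then show ?thesis using cmp_D1[OF fk kn cc] ij by auto
    next
      case lc
      then show ?thesis using cmp_D3[OF fk kn lc(1) ij(1)] by simp
    next
      case cl
      then show ?thesis using cmp_D2[OF fk kn cl(1) ij(2)] by simp
    qed
  next
    fix i j assume ij: "i < n" "j < n"
      and h: "i \<noteq> j \<and> {i,j} \<notin> G k n f \<and> util b c 0 n (insert {i,j} (G k n f)) i > util b c 0 n (G k n f) i"
    have ne: "\<not> (i<k \<and> j<k)" "\<not> (k\<le>i \<and> j = f i)" "\<not> (k\<le>j \<and> i = f j)"
      using h ij memG'[OF fk, of i j] by auto
    show "util b c 0 n (insert {i,j} (G k n f)) j < util b c 0 n (G k n f) j"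
    proof (cases "i < k")
      case True
      then have "k \<le> j" "f j \<noteq> i" using ne by auto
      then have "util b c 0 n (insert {i,j} (G k n f)) i < util b c 0 n (G k n f) i"
        using cmp_A1[OF fk kn True] ij by auto
      then show ?thesis using h by auto
    next
      case False
      show ?thesis
      proof (cases "j < k")
        case True
        then have "f i \<noteq> j" using ne False by auto
        then have "util b c 0 n (insert {j,i} (G k n f)) j < util b c 0 n (G k n f) j"
          using cmp_A1[OF fk kn True] ij False by auto
        then show ?thesis by (simp add: insert_commute)
      next
        case F2: False
        then have "util b c 0 n (insert {i,j} (G k n f)) i \<le> util b c 0 n (G k n f) i"
          using cmp_A34[OF fk kn] ij False h by auto
        then show ?thesis using h by auto
      qed
    qed
  qed
qed

lemma inv_kstar:
  assumes I: "inv n f"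
  shows "kstar k n (G k n f)"
proof -
  have fk: "\<forall>l. k\<le>l \<longrightarrow> l<n \<longrightarrow> f l < k" and kn: "2*k \<le> n" using I unfolding inv_def by auto
  have edges: "\<forall>e\<in>G k n f. \<exists>i j. i < n \<and> j < n \<and> i \<noteq> j \<and> e = {i, j}"
  proof
    fix e assume "e \<in> G k n f"
    then obtain i j where "e = {i,j}" "(i<k \<and> j<k \<and> i\<noteq>j) \<or> (k \<le> i \<and> i < n \<and> j = f i)"
      unfolding G_def by auto
    then show "\<exists>i j. i < n \<and> j < n \<and> i \<noteq> j \<and> e = {i, j}" using fk kn by (intro exI[of _ i] exI[of _ j]) auto
  qed
  have nb_leaf: "nbrs (G k n f) l = {f l}" if "l \<in> {..<n} - {..<k}" for l
    using that fk by (auto simp: nbrs_def memG'[OF fk])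
  have nb_center: "nbrs (G k n f) x - {..<k} = {l\<in>{k..<n}. f l = x}" if "x < k" for x
    using that fk by (auto simp: nbrs_def memG'[OF fk])
  show ?thesis unfolding kstar_def
  proof (intro conjI exI[of _ "{..<k}"])
    show "2 * k \<le> n" using kn .
    show "\<forall>e\<in>G k n f. \<exists>i j. i < n \<and> j < n \<and> i \<noteq> j \<and> e = {i, j}" using edges .
    show "{..<k} \<subseteq> {..<n}" using kn by auto
    show "card {..<k} = k" by simp
    show "\<forall>x\<in>{..<k}. \<forall>y\<in>{..<k}. x \<noteq> y \<longrightarrow> {x, y} \<in> G k n f" by (auto simp: memG'[OF fk])
    show "\<forall>l\<in>{..<n} - {..<k}. \<exists>x\<in>{..<k}. nbrs (G k n f) l = {x}"
      using nb_leaf fk by auto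
    show "\<forall>x\<in>{..<k}. 1 \<le> card (nbrs (G k n f) x - {..<k})"
      using nb_center I unfolding inv_def Lc_def by auto
    show "\<forall>x\<in>{..<k}. \<forall>y\<in>{..<k}. card (nbrs (G k n f) x - {..<k}) \<le> card (nbrs (G k n f) y - {..<k}) + 1"
      using nb_center I unfolding inv_def Lc_def by auto
  qed
qed

end



context ks begin

lemma deg_center:
  assumes fk: "\<forall>l. k\<le>l \<longrightarrow> l<n \<longrightarrow> f l < k" and t: "t < k"
  shows "deg (G k n f) t = k - 1 + Lc k n f t"
proof -
  have "nbrs (G k n f) t = ({..<k} - {t}) \<union> {l\<in>{k..<n}. f l = t}"
    using t fk by (auto simp: nbrs_def memG'[OF fk])
  moreover have "card (({..<k} - {t}) \<union> {l\<in>{k..<n}. f l = t}) = card ({..<k} - {t}) + card {l\<in>{k..<n}. f l = t}"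
    by (rule card_Un_disjoint) auto
  ultimately show ?thesis unfolding deg_def Lc_def using t by simp
qed

lemma deg_leaf:
  assumes fk: "\<forall>l. k\<le>l \<longrightarrow> l<n \<longrightarrow> f l < k" and t: "k \<le> t" "t < n"
  shows "deg (G k n f) t = 1"
proof -
  have "nbrs (G k n f) t = {f t}"
    using t fk by (auto simp: nbrs_def memG'[OF fk])
  then show ?thesis unfolding deg_def by simp
qed

lemma G_insert_center:
  assumes kn: "k \<le> n"
  shows "insert {n,t} (G k n f) = G k (Suc n) (f(n:=t))"
proof -
  have "{{l, (f(n:=t)) l}|l. k\<le>l \<and> l<Suc n} = insert {n,t} {{l, f l}|l. k\<le>l \<and> l<n}"
    using kn by (auto simp: less_Suc_eq)
  then show ?thesis unfolding G_def by auto
qed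

lemma fk_upd:
  assumes fk: "\<forall>l. k\<le>l \<longrightarrow> l<n \<longrightarrow> f l < k" and t: "t < k"
  shows "\<forall>l. k\<le>l \<longrightarrow> l<Suc n \<longrightarrow> (f(n:=t)) l < k"
  using fk t by (auto simp: less_Suc_eq)

lemma Lc_upd:
  assumes kn: "k \<le> n"
  shows "Lc k (Suc n) (f(n:=t)) x = Lc k n f x + (if x = t then 1 else 0)"
proof -
  have "{l\<in>{k..<Suc n}. (f(n:=t)) l = x} = {l\<in>{k..<n}. f l = x} \<union> (if x = t then {n} else {})"
    using kn by (auto simp: less_Suc_eq)
  then show ?thesis unfolding Lc_def by (auto simp: card_insert_if)
qed

lemma value_center:
  assumes fk: "\<forall>l. k\<le>l \<longrightarrow> l<n \<longrightarrow> f l < k" and kn: "k \<le> n" and t: "t < k"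
  shows "entry_value b c 0 c0 n (G k n f) t = b 3 + (real k - 1) * b 2 + real (Lc k n f t) * b 2
     + (real n - real k - real (Lc k n f t)) * b 3 - c0 * (real k - 1 + real (Lc k n f t))"
proof -
  have fk': "\<forall>l. k\<le>l \<longrightarrow> l<Suc n \<longrightarrow> (f(n:=t)) l < k" by (rule fk_upd[OF fk t])
  have u: "util b c 0 (Suc n) (G k (Suc n) (f(n:=t))) n = (\<Sum>w<Suc n. if w = n then 0 else if w < k then (if w = (f(n:=t)) n then b 1 - c else b 2)
            else if (f(n:=t)) w = (f(n:=t)) n then b 2 else b 3)"
    using kn by (intro util_U2[OF fk']) auto
  also have "\<dots> = (\<Sum>w<n. if w < k then (if w = t then b 1 - c else b 2) else if f w = t then b 2 else b 3)"
    apply (simp add: sum.lessThan_Suc del: fun_upd_apply)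
    apply (rule sum.cong)
     apply auto
    done
  also have "\<dots> = (\<Sum>w<k. if w = t then b 1 - c else b 2) + (\<Sum>w\<in>{k..<n}. if f w = t then b 2 else b 3)"
    by (simp add: sum_split_n[OF kn])
  also have "\<dots> = b 3 + (real k - 1) * b 2 + (real (Lc k n f t) * b 2 + (real n - real k - real (Lc k n f t)) * b 3)"
    by (simp add: sum_center[OF t] sum_leaves[OF kn] cdef)
  finally have u2: "util b c 0 (Suc n) (G k (Suc n) (f(n:=t))) n = b 3 + (real k - 1) * b 2 + (real (Lc k n f t) * b 2 + (real n - real k - real (Lc k n f t)) * b 3)" .
  have d: "real (deg (G k n f) t) = real k - 1 + real (Lc k n f t)"
    using deg_center[OF fk t] t by (simp add: of_nat_diff)
  show ?thesis unfolding entry_value_def G_insert_center[OF kn] u2 d by simp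
qed

lemma value_leaf:
  assumes fk: "\<forall>l. k\<le>l \<longrightarrow> l<n \<longrightarrow> f l < k" and kn: "k \<le> n" and t: "k \<le> t" "t < n"
  shows "entry_value b c 0 c0 n (G k n f) t = b 2 + (real k - 1) * b 3 + b 3 + (real (Lc k n f (f t)) - 1) * b 3
     + (real n - real k - real (Lc k n f (f t))) * b 4 - c0"
proof -
  have m: "f t < k" using fk t by auto
  have "util b c 0 (Suc n) (insert {n,t} (G k n f)) n = (\<Sum>w<Suc n. if w = n then 0 else if w < k then (if w = f t then b 2 else b 3)
            else if w = t then b 1 - c else if f w = f t then b 3 else b 4)"
    by (rule util_E2[OF fk kn t])
  also have "\<dots> = (\<Sum>w<n. if w < k then (if w = f t then b 2 else b 3)
            else if w = t then b 1 - c else if f w = f t then b 3 else b 4)"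
    by (simp add: sum.lessThan_Suc)
  also have "\<dots> = (\<Sum>w<k. if w = f t then b 2 else b 3) + (\<Sum>w\<in>{k..<n}. if w = t then b 1 - c else if f w = f t then b 3 else b 4)"
    by (simp add: sum_split_n[OF kn])
  also have "\<dots> = b 2 + (real k - 1) * b 3 + (b 3 + (real (Lc k n f (f t)) - 1) * b 3 + (real n - real k - real (Lc k n f (f t))) * b 4)"
    using t by (simp add: sum_center[OF m] sum_leaves2 cdef)
  finally have u2: "util b c 0 (Suc n) (insert {n,t} (G k n f)) n = b 2 + (real k - 1) * b 3 + (b 3 + (real (Lc k n f (f t)) - 1) * b 3 + (real n - real k - real (Lc k n f (f t))) * b 4)" .
  show ?thesis unfolding entry_value_def u2 deg_leaf[OF fk t] by simp
qed

lemma feasible_center: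
  assumes fk: "\<forall>l. k\<le>l \<longrightarrow> l<n \<longrightarrow> f l < k" and kn: "k \<le> n" and t: "t < k"
  shows "entry_feasible b c 0 n (G k n f) t"
proof -
  have fk': "\<forall>l. k\<le>l \<longrightarrow> l<Suc n \<longrightarrow> (f(n:=t)) l < k" by (rule fk_upd[OF fk t])
  have "util b c 0 (Suc n) (G k (Suc n) (f(n:=t))) t = (\<Sum>w<Suc n. if w = t then 0 else if w < k then b 1 - c
            else if (f(n:=t)) w = t then b 1 - c else b 2)"
    using kn by (intro util_U1[OF fk' _ t]) auto
  also have "\<dots> = (\<Sum>w<n. if w = t then 0 else if w < k then b 1 - c
            else if f w = t then b 1 - c else b 2) + (b 1 - c)"
    using t kn by (simp add: sum.lessThan_Suc, intro sum.cong) auto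
  also have "(\<Sum>w<n. if w = t then 0 else if w < k then b 1 - c
            else if f w = t then b 1 - c else b 2) = util b c 0 n (G k n f) t"
    by (rule util_U1[OF fk kn t, symmetric])
  finally have calc: "util b c 0 (Suc n) (G k (Suc n) (f(n:=t))) t = util b c 0 n (G k n f) t + (b 1 - c)" .
  show ?thesis unfolding entry_feasible_def G_insert_center[OF kn]
  proof
    show "t < n" using t kn by simp
    show "util b c 0 n (G k n f) t \<le> util b c 0 (Suc n) (G k (Suc n) (f(n:=t))) t"
      using calc b3pos cdef by linarith
  qed
qed

end



lemma sum_Lc:
  assumes fk: "\<forall>l. k\<le>l \<longrightarrow> l<n \<longrightarrow> f l < k"
  shows "(\<Sum>x<k. Lc k n f x) = n - k"
proof -
  have "card (\<Union>x\<in>{..<k}. {l\<in>{k..<n}. f l = x}) = (\<Sum>x<k. card {l\<in>{k..<n}. f l = x})"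
    by (rule card_UN_disjoint) auto
  moreover have "(\<Union>x\<in>{..<k}. {l\<in>{k..<n}. f l = x}) = {k..<n}" using fk by auto
  ultimately show ?thesis unfolding Lc_def by simp
qed

lemma Lc_le:
  "Lc k n f x \<le> n - k"
proof -
  have "card {l\<in>{k..<n}. f l = x} \<le> card {k..<n}" by (rule card_mono) auto
  then show ?thesis unfolding Lc_def by simp
qed

context ks begin

lemma X_nonneg:
  assumes I: "inv n f" and tm: "tm < k" "\<forall>y<k. Lc k n f tm \<le> Lc k n f y" and m: "m < k"
  shows "real n - real k - real (Lc k n f tm) - real (Lc k n f m) - real k + 2 \<ge> 0"
proof -
  have fk: "\<forall>l. k\<le>l \<longrightarrow> l<n \<longrightarrow> f l < k" and kn: "2*k \<le> n" and pos: "\<forall>x<k. 1 \<le> Lc k n f x"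
    using I unfolding inv_def by auto
  have S: "real (\<Sum>x<k. Lc k n f x) = real n - real k" using sum_Lc[OF fk] kn by (simp add: of_nat_diff)
  show ?thesis
  proof (cases "m = tm")
    case True
    have "(\<Sum>x<k. Lc k n f tm) \<le> (\<Sum>x<k. Lc k n f x)" by (rule sum_mono) (use tm in auto)
    then have A: "k * Lc k n f tm \<le> (\<Sum>x<k. Lc k n f x)" by simp
    have "real (k * Lc k n f tm) \<le> real (\<Sum>x<k. Lc k n f x)" using A by (simp only: of_nat_le_iff)
    then have B: "real k * real (Lc k n f tm) \<le> real n - real k" using S by simp
    have C: "(real k - 2) * (real (Lc k n f tm) - 1) \<ge> 0"
      using k3 pos tm by (intro mult_nonneg_nonneg) auto
    have D: "(real k - 2) * (real (Lc k n f tm) - 1) = real k * real (Lc k n f tm) - real k - 2 * real (Lc k n f tm) + 2"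
      by (simp add: algebra_simps)
    show ?thesis unfolding True using B C D by linarith
  next
    case False
    have T: "{tm, m} \<subseteq> {..<k}" using tm m by auto
    have s1: "(\<Sum>x<k. Lc k n f x) = (\<Sum>x\<in>{..<k} - {tm,m}. Lc k n f x) + (\<Sum>x\<in>{tm,m}. Lc k n f x)"
      using sum.subset_diff[OF T] by simp
    have s2: "(\<Sum>x\<in>{tm,m}. Lc k n f x) = Lc k n f tm + Lc k n f m" using False by simp
    have "(\<Sum>x\<in>{..<k} - {tm,m}. (1::nat)) \<le> (\<Sum>x\<in>{..<k} - {tm,m}. Lc k n f x)"
      by (rule sum_mono) (use pos in auto)
    moreover have "(\<Sum>x\<in>{..<k} - {tm,m}. (1::nat)) = k - 2"
      using T False by (simp add: card_Diff_subset)
    ultimately have "k - 2 + Lc k n f tm + Lc k n f m \<le> n - k" using s1 s2 sum_Lc[OF fk] by linarith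
    then show ?thesis using k3 kn by linarith
  qed
qed

lemma V1:
  assumes I: "inv n f" and t: "t < k" "t' < k" and le: "Lc k n f t \<le> Lc k n f t'"
  shows "entry_value b c 0 c0 n (G k n f) t' - entry_value b c 0 c0 n (G k n f) t
       = (real (Lc k n f t') - real (Lc k n f t)) * (b 2 - b 3 - c0)"
proof -
  have fk: "\<forall>l. k\<le>l \<longrightarrow> l<n \<longrightarrow> f l < k" and kn: "k \<le> n" using I unfolding inv_def by auto
  show ?thesis unfolding value_center[OF fk kn t(1)] value_center[OF fk kn t(2)] by (simp add: algebra_simps)
qed

lemma V2:
  assumes I: "inv n f" and tm: "tm < k" "\<forall>y<k. Lc k n f tm \<le> Lc k n f y" and t: "k \<le> t" "t < n"
  shows "entry_value b c 0 c0 n (G k n f) t < entry_value b c 0 c0 n (G k n f) tm"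
proof -
  have fk: "\<forall>l. k\<le>l \<longrightarrow> l<n \<longrightarrow> f l < k" and kn: "k \<le> n" using I unfolding inv_def by auto
  have m: "f t < k" using fk t by auto
  define L where "L = real (Lc k n f tm)"
  define L' where "L' = real (Lc k n f (f t))"
  define X where "X = real n - real k - L - L' - real k + 2"
  have X: "X \<ge> 0" using X_nonneg[OF I tm m] unfolding X_def L_def L'_def .
  have eq: "entry_value b c 0 c0 n (G k n f) tm - entry_value b c 0 c0 n (G k n f) t
     = (real k - 2 + L) * (b 2 - c0 - b 4) + X * (b 3 - b 4)"
    unfolding value_center[OF fk kn tm(1)] value_leaf[OF fk kn t] X_def L_def[symmetric] L'_def[symmetric]
    by (simp add: algebra_simps)
  have "(real k - 2 + L) * (b 2 - c0 - b 4) > 0"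
    using k3 c0u unfolding L_def by (intro mult_pos_pos) auto
  moreover have "X * (b 3 - b 4) \<ge> 0" using X b34 by simp
  ultimately show ?thesis using eq by linarith
qed

lemma V_pos:
  assumes I: "inv n f" and tm: "tm < k"
  shows "entry_value b c 0 c0 n (G k n f) tm > 0"
proof -
  have fk: "\<forall>l. k\<le>l \<longrightarrow> l<n \<longrightarrow> f l < k" and kn: "2 * k \<le> n" using I unfolding inv_def by auto
  have kn': "k \<le> n" using kn by simp
  have L: "real (Lc k n f tm) \<le> real n - real k" using Lc_le[of k n f tm] kn by (simp add: of_nat_diff)
  have eq: "entry_value b c 0 c0 n (G k n f) tm = b 3 + (real k - 1 + real (Lc k n f tm)) * (b 2 - c0)
       + (real n - real k - real (Lc k n f tm)) * b 3"
    unfolding value_center[OF fk kn' tm] by (simp add: algebra_simps)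
  have "(real k - 1 + real (Lc k n f tm)) * (b 2 - c0) \<ge> 0"
    using k3 c0u b4pos by (intro mult_nonneg_nonneg) auto
  moreover have "(real n - real k - real (Lc k n f tm)) * b 3 \<ge> 0" using L b3pos by simp
  ultimately show ?thesis using eq b3pos by linarith
qed

lemma inv_step:
  assumes I: "inv n f" and t: "t < k" "\<forall>y<k. Lc k n f t \<le> Lc k n f y"
  shows "inv (Suc n) (f(n:=t))"
proof -
  have fk: "\<forall>l. k\<le>l \<longrightarrow> l<n \<longrightarrow> f l < k" and kn: "2*k \<le> n" using I unfolding inv_def by auto
  have L: "Lc k (Suc n) (f(n:=t)) x = Lc k n f x + (if x = t then 1 else 0)" for x
    using Lc_upd kn by simp
  have bal: "\<forall>x<k. \<forall>y<k. Lc k n f x \<le> Lc k n f y + 1" and pos: "\<forall>x<k. 1 \<le> Lc k n f x"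
    using I unfolding inv_def by auto
  show ?thesis unfolding inv_def L
  proof (intro conjI allI impI)
    show "2 * k \<le> Suc n" using kn by simp
  next
    fix l assume "k \<le> l" "l < Suc n"
    then show "(f(n := t)) l < k" using fk_upd[OF fk t(1)] by blast
  next
    fix x assume x: "x < k"
    show "1 \<le> Lc k n f x + (if x = t then 1 else 0)" using pos x by auto
  next
    fix x assume x: "x < k"
    fix y assume y: "y < k"
    have a: "Lc k n f x \<le> Lc k n f y + 1" using bal x y by blast
    have b1: "Lc k n f t \<le> Lc k n f y" using t(2) y by blast
    have b2: "Lc k n f t \<le> Lc k n f x" using t(2) x by blast
    have b3: "Lc k n f x \<le> Lc k n f t + 1" using bal x t(1) by blast
    show "Lc k n f x + (if x = t then 1 else 0) \<le> Lc k n f y + (if y = t then 1 else 0) + 1"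
      using a b1 b2 b3 by (cases "x = t"; cases "y = t") auto
  qed
qed

lemma min_center:
  assumes "0 < k"
  obtains tm where "tm < k" "\<forall>y<k. Lc k n f tm \<le> Lc k n f y"
proof -
  have "Min (Lc k n f ` {..<k}) \<in> Lc k n f ` {..<k}" using assms by (intro Min_in) auto
  then obtain tm where tm: "tm < k" "Lc k n f tm = Min (Lc k n f ` {..<k})" by auto
  have "\<forall>y<k. Lc k n f tm \<le> Lc k n f y" using tm by auto
  then show ?thesis using that tm by blast
qed

lemma entry_step:
  assumes I: "inv n f" and e: "entry b c 0 c0 n (G k n f) E'"
  shows "\<exists>f'. inv (Suc n) f' \<and> E' = G k (Suc n) f'"
proof -
  have fk: "\<forall>l. k\<le>l \<longrightarrow> l<n \<longrightarrow> f l < k" and kn: "2*k \<le> n" using I unfolding inv_def by auto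
  have k0: "0 < k" using k3 by simp
  obtain tm where tm: "tm < k" "\<forall>y<k. Lc k n f tm \<le> Lc k n f y" using min_center[OF k0, of n f] by blast
  obtain t where t: "entry_feasible b c 0 n (G k n f) t"
    "\<forall>t'. entry_feasible b c 0 n (G k n f) t' \<longrightarrow> entry_value b c 0 c0 n (G k n f) t' \<le> entry_value b c 0 c0 n (G k n f) t"
    "E' = insert {n, t} (G k n f)"
    using e unfolding entry_def by blast
  have ge: "entry_value b c 0 c0 n (G k n f) tm \<le> entry_value b c 0 c0 n (G k n f) t"
    using t(2) feasible_center[OF fk _ tm(1)] kn by auto
  have tn: "t < n" using t(1) unfolding entry_feasible_def by simp
  have tk: "t < k"
  proof (rule ccontr)
    assume "\<not> t < k"
    then show False using V2[OF I tm, of t] tn ge by auto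
  qed
  have "Lc k n f t \<le> Lc k n f tm"
  proof (rule ccontr)
    assume "\<not> Lc k n f t \<le> Lc k n f tm"
    then have lt: "real (Lc k n f t) - real (Lc k n f tm) > 0" by simp
    have "(real (Lc k n f t) - real (Lc k n f tm)) * (b 2 - b 3 - c0) < 0"
      using lt c0l by (intro mult_pos_neg) auto
    then show False using V1[OF I tm(1) tk] \<open>\<not> Lc k n f t \<le> Lc k n f tm\<close> ge by auto
  qed
  then have tmin: "\<forall>y<k. Lc k n f t \<le> Lc k n f y" using tm by force
  show ?thesis
    using inv_step[OF I tk tmin] t(3) G_insert_center[of n t f] kn by auto
qed

lemma entry_exists:
  assumes I: "inv n f"
  shows "\<exists>t. entry b c 0 c0 n (G k n f) (G k (Suc n) (f(n:=t))) \<and> inv (Suc n) (f(n:=t))"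
proof -
  have fk: "\<forall>l. k\<le>l \<longrightarrow> l<n \<longrightarrow> f l < k" and kn: "2*k \<le> n" using I unfolding inv_def by auto
  have k0: "0 < k" using k3 by simp
  obtain tm where tm: "tm < k" "\<forall>y<k. Lc k n f tm \<le> Lc k n f y" using min_center[OF k0, of n f] by blast
  have "entry b c 0 c0 n (G k n f) (G k (Suc n) (f(n:=tm)))"
    unfolding entry_def
  proof (intro exI conjI allI impI)
    show "entry_feasible b c 0 n (G k n f) tm" using feasible_center[OF fk _ tm(1)] kn by auto
    show "0 < entry_value b c 0 c0 n (G k n f) tm" by (rule V_pos[OF I tm(1)])
    show "G k (Suc n) (f(n := tm)) = insert {n, tm} (G k n f)" using G_insert_center[of n tm f] kn by auto
  next
    fix t' assume "entry_feasible b c 0 n (G k n f) t'"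
    then have t': "t' < n" unfolding entry_feasible_def by simp
    show "entry_value b c 0 c0 n (G k n f) t' \<le> entry_value b c 0 c0 n (G k n f) tm"
    proof (cases "t' < k")
      case True
      have "(real (Lc k n f t') - real (Lc k n f tm)) * (b 2 - b 3 - c0) \<le> 0"
        using tm True c0l by (intro mult_nonneg_nonpos) auto
      then show ?thesis using V1[OF I tm(1) True] tm True by auto
    next
      case False
      then show ?thesis using V2[OF I tm, of t'] t' by auto
    qed
  qed
  then show ?thesis using inv_step[OF I tm] by blast
qed

end



lemma base_G: "base_kstar k = G k (2*k) (\<lambda>l. l - k)"
proof -
  have "{{i, k + i} |i. i < k} = {{l, l - k} |l. k \<le> l \<and> l < 2*k}"
  proof (intro set_eqI iffI)
    fix e assume "e \<in> {{i, k + i} |i. i < k}"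
    then obtain i where "i < k" "e = {i, k+i}" by auto
    then show "e \<in> {{l, l - k} |l. k \<le> l \<and> l < 2*k}"
      by (intro CollectI exI[of _ "k+i"]) (auto simp: insert_commute)
  next
    fix e assume "e \<in> {{l, l - k} |l. k \<le> l \<and> l < 2*k}"
    then obtain l where "k \<le> l" "l < 2*k" "e = {l, l-k}" by auto
    then show "e \<in> {{i, k + i} |i. i < k}"
      by (intro CollectI exI[of _ "l-k"]) (auto simp: insert_commute)
  qed
  then show ?thesis unfolding base_kstar_def G_def by simp
qed

context ks begin

lemma base_inv: "inv (2*k) (\<lambda>l. l - k)"
proof -
  have L: "Lc k (2*k) (\<lambda>l. l - k) x = 1" if "x < k" for x
  proof -
    have "{l\<in>{k..<2*k}. l - k = x} = {k + x}" using that by auto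
    then show ?thesis unfolding Lc_def by simp
  qed
  show ?thesis unfolding inv_def using L by auto
qed

lemma reach_inv:
  assumes "(step b c 0 c0)\<^sup>*\<^sup>* (2 * k, base_kstar k) s"
  shows "\<exists>f. inv (fst s) f \<and> snd s = G k (fst s) f"
  using assms
proof (induction rule: rtranclp_induct)
  case base
  then show ?case using base_inv base_G by auto
next
  case (step y z)
  obtain n E where y: "y = (n, E)" by (cases y)
  obtain n' E' where z: "z = (n', E')" by (cases z)
  obtain f where f: "inv n f" "E = G k n f" using step.IH y by auto
  have ps: "pairwise_stable b c 0 n E" using PS[OF f(1)] f(2) by simp
  have "n' = Suc n \<and> entry b c 0 c0 n E E'" using step.hyps(2) ps unfolding y z step_def by auto
  then show ?case using entry_step[OF f(1)] f(2) z by auto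
qed

lemma reach_all:
  assumes "2 * k \<le> n"
  shows "\<exists>f. inv n f \<and> (step b c 0 c0)\<^sup>*\<^sup>* (2 * k, base_kstar k) (n, G k n f)"
  using assms
proof (induction n rule: dec_induct)
  case base
  then show ?case using base_inv base_G by auto
next
  case (step n)
  then obtain f where f: "inv n f" "(step b c 0 c0)\<^sup>*\<^sup>* (2 * k, base_kstar k) (n, G k n f)" by auto
  obtain t where t: "entry b c 0 c0 n (G k n f) (G k (Suc n) (f(n:=t)))" "inv (Suc n) (f(n:=t))"
    using entry_exists[OF f(1)] by blast
  have "step b c 0 c0 (n, G k n f) (Suc n, G k (Suc n) (f(n:=t)))"
    unfolding step_def using PS[OF f(1)] t(1) by simp
  then have "(step b c 0 c0)\<^sup>*\<^sup>* (2 * k, base_kstar k) (Suc n, G k (Suc n) (f(n:=t)))"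
    using f(2) by (rule rtranclp.rtrancl_into_rtrancl[rotated])
  then show ?case using t(2) by blast
qed

end

theorem theorem5:
  fixes k :: nat and b :: "nat \<Rightarrow> real" and c gam c0 :: real
  assumes "k \<ge> 3"
    and "\<forall>i\<ge>1. b i > 0"
    and "\<forall>i\<ge>1. b (Suc i) < b i"
    and "gam = 0"
    and "c = b 1 - b 3"
    and "b 2 - b 3 < c0" and "c0 < b 2 - b 4"
  shows "(\<forall>n E. (step b c gam c0)\<^sup>*\<^sup>* (2 * k, base_kstar k) (n, E)
                 \<and> pairwise_stable b c gam n E \<longrightarrow> kstar k n E)
       \<and> (\<forall>n\<ge>2 * k. \<exists>E. (step b c gam c0)\<^sup>*\<^sup>* (2 * k, base_kstar k) (n, E)
                 \<and> pairwise_stable b c gam n E)"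
proof -
  interpret ks k b c c0 using assms by unfold_locales auto
  have g: "gam = 0" by (rule assms(4))
  show ?thesis unfolding g
  proof (intro conjI allI impI)
    fix n E assume "(step b c 0 c0)\<^sup>*\<^sup>* (2 * k, base_kstar k) (n, E) \<and> pairwise_stable b c 0 n E"
    then obtain f where "inv n f" "E = G k n f" using reach_inv[of "(n, E)"] by auto
    then show "kstar k n E" using inv_kstar by simp
  next
    fix n :: nat assume "2 * k \<le> n"
    then obtain f where f: "inv n f" "(step b c 0 c0)\<^sup>*\<^sup>* (2 * k, base_kstar k) (n, G k n f)"
      using reach_all by blast
    then show "\<exists>E. (step b c 0 c0)\<^sup>*\<^sup>* (2 * k, base_kstar k) (n, E) \<and> pairwise_stable b c 0 n E"
      using PS[OF f(1)] by blast
  qed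
qed



end
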